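(* For every two finite simple graphs $G$ and $H$ without isolated vertices, $$\gamma_{tR}(G\times H)\le \min\{\omega(g)\omega(h)-2|A_2||B_2|\},$$ where the minimum is taken over all total Roman dominating functions $g=(A_0,A_1,A_2)$ on $G$ and $h=(B_0,B_1,B_2)$ on $H$.
   Context: For a graph $G$ without isolated vertices, a total Roman dominating function is a map $f:V(G)\to\{0,1,2\}$, written $f=(V_0,V_1,V_2)$ with $V_i=\{v:f(v)=i\}$, such that every vertex in $V_0$ has a neighbor in $V_2$ and the subgraph induced by $V_1\cup V_2$ has no isolated vertices. Its weight is $\omega(f)=\sum_v f(v)$; $\gamma_{tR}(G)$ is the minimum weight of a total Roman dominating function. The direct product $G\times H$ has vertex set $V(G)\times V(H)$, with $(g,h)(g',h')$ an edge iff $gg'\in E(G)$ and $hh'\in E(H)$. *)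

theory Defs
  imports Main
begin

definition simple_graph :: "'a set \<Rightarrow> ('a \<Rightarrow> 'a \<Rightarrow> bool) \<Rightarrow> bool" where
  "simple_graph V E \<longleftrightarrow> finite V \<and> (\<forall>u v. E u v \<longrightarrow> u \<in> V \<and> v \<in> V)
     \<and> (\<forall>u v. E u v \<longrightarrow> E v u) \<and> (\<forall>v. \<not> E v v)"

definition no_isolated :: "'a set \<Rightarrow> ('a \<Rightarrow> 'a \<Rightarrow> bool) \<Rightarrow> bool" where
  "no_isolated V E \<longleftrightarrow> (\<forall>v\<in>V. \<exists>u. E v u)"

definition dprod_edges :: "('a \<Rightarrow> 'a \<Rightarrow> bool) \<Rightarrow> ('b \<Rightarrow> 'b \<Rightarrow> bool)
    \<Rightarrow> ('a \<times> 'b) \<Rightarrow> ('a \<times> 'b) \<Rightarrow> bool" where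
  "dprod_edges E F x y \<longleftrightarrow> E (fst x) (fst y) \<and> F (snd x) (snd y)"

text \<open>Total Roman dominating function f : V \<rightarrow> {0,1,2} (represented as a function
into nat which is 0 outside V): every vertex labelled 0 has a neighbour labelled 2,
and the subgraph induced by V_1 \<union> V_2 has no isolated vertex.\<close>

definition is_trdf :: "'a set \<Rightarrow> ('a \<Rightarrow> 'a \<Rightarrow> bool) \<Rightarrow> ('a \<Rightarrow> nat) \<Rightarrow> bool" where
  "is_trdf V E f \<longleftrightarrow>
     (\<forall>v. v \<notin> V \<longrightarrow> f v = 0) \<and> (\<forall>v\<in>V. f v \<le> 2)
     \<and> (\<forall>v\<in>V. f v = 0 \<longrightarrow> (\<exists>u. E v u \<and> f u = 2))
     \<and> (\<forall>v\<in>V. f v \<noteq> 0 \<longrightarrow> (\<exists>u. E v u \<and> f u \<noteq> 0))"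

definition weight :: "'a set \<Rightarrow> ('a \<Rightarrow> nat) \<Rightarrow> nat" where
  "weight V f = (\<Sum>v\<in>V. f v)"

definition level_set :: "'a set \<Rightarrow> ('a \<Rightarrow> nat) \<Rightarrow> nat \<Rightarrow> 'a set" where
  "level_set V f i = {v\<in>V. f v = i}"

definition gamma_tR :: "'a set \<Rightarrow> ('a \<Rightarrow> 'a \<Rightarrow> bool) \<Rightarrow> nat" where
  "gamma_tR V E = Min {weight V f | f. is_trdf V E f}"

end

theory Submission
  imports Defs
begin

lemma trdf_bound: "is_trdf V E f \<Longrightarrow> f v \<le> 2"
  unfolding is_trdf_def by (cases "v \<in> V") auto

lemma weight_le: assumes "is_trdf V E f" shows "weight V f \<le> 2 * card V"
proof -
  have "weight V f \<le> (\<Sum>v\<in>V. 2)" unfolding weight_def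
    by (rule sum_mono) (use trdf_bound[OF assms] in auto)
  thus ?thesis by simp
qed

lemma level_card: "card (level_set V f i) \<le> card V" if "finite V"
  unfolding level_set_def using that by (intro card_mono) auto

lemma prod_trdf:
  assumes g: "is_trdf VG EG g" and h: "is_trdf VH EH h"
  shows "is_trdf (VG \<times> VH) (dprod_edges EG EH) (\<lambda>p. min 2 (g (fst p) * h (snd p)))"
proof -
  note gd = g[unfolded is_trdf_def] and hd = h[unfolded is_trdf_def]
  show ?thesis unfolding is_trdf_def dprod_edges_def
  proof (intro conjI ballI allI impI)
    fix p :: "'a \<times> 'b" assume "p \<notin> VG \<times> VH"
    then show "min 2 (g (fst p) * h (snd p)) = 0" using gd hd by (cases p) auto
  next
    fix p :: "'a \<times> 'b" show "min 2 (g (fst p) * h (snd p)) \<le> 2" by simp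
  next
    fix p :: "'a \<times> 'b" assume p: "p \<in> VG \<times> VH" and z: "min 2 (g (fst p) * h (snd p)) = 0"
    obtain x y where pxy: "p = (x,y)" by (cases p)
    have xV: "x \<in> VG" and yV: "y \<in> VH" using p pxy by auto
    show "\<exists>u. (EG (fst p) (fst u) \<and> EH (snd p) (snd u)) \<and> min 2 (g (fst u) * h (snd u)) = 2"
    proof (cases "g x = 0")
      case True
      then obtain x' where x': "EG x x'" "g x' = 2" using gd xV by blast
      show ?thesis
      proof (cases "h y = 0")
        case True
        then obtain y' where "EH y y'" "h y' = 2" using hd yV by blast
        then show ?thesis using x' pxy by (intro exI[of _ "(x',y')"]) auto
      next
        case False
        then obtain y' where "EH y y'" "h y' \<noteq> 0" using hd yV by blast
        then show ?thesis using x' pxy by (intro exI[of _ "(x',y')"]) auto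
      qed
    next
      case False
      then have "h y = 0" using z pxy by (simp add: min_def split: if_splits)
      then obtain y' where y': "EH y y'" "h y' = 2" using hd yV by blast
      obtain x' where "EG x x'" "g x' \<noteq> 0" using gd xV False by blast
      then show ?thesis using y' pxy by (intro exI[of _ "(x',y')"]) auto
    qed
  next
    fix p :: "'a \<times> 'b" assume p: "p \<in> VG \<times> VH" and z: "min 2 (g (fst p) * h (snd p)) \<noteq> 0"
    obtain x y where pxy: "p = (x,y)" by (cases p)
    have xV: "x \<in> VG" and yV: "y \<in> VH" using p pxy by auto
    have "g x \<noteq> 0" "h y \<noteq> 0" using z pxy by auto
    then obtain x' y' where "EG x x'" "g x' \<noteq> 0" "EH y y'" "h y' \<noteq> 0" using gd hd xV yV by blast
    then show "\<exists>u. (EG (fst p) (fst u) \<and> EH (snd p) (snd u)) \<and> min 2 (g (fst u) * h (snd u)) \<noteq> 0"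
      using pxy by (intro exI[of _ "(x',y')"]) auto
  qed
qed

lemma prod_weight:
  assumes g: "is_trdf VG EG g" and h: "is_trdf VH EH h" and fin: "finite VG" "finite VH"
  shows "int (weight (VG \<times> VH) (\<lambda>p. min 2 (g (fst p) * h (snd p)))) =
    int (weight VG g) * int (weight VH h)
                - 2 * int (card (level_set VG g 2)) * int (card (level_set VH h 2))"
proof -
  have pt: "int (min 2 (g (fst p) * h (snd p))) =
      int (g (fst p)) * int (h (snd p)) - 2 * (if p \<in> level_set VG g 2 \<times> level_set VH h 2 then 1 else 0)"
    if "p \<in> VG \<times> VH" for p
  proof -
    have a: "g (fst p) \<le> 2" "h (snd p) \<le> 2" using trdf_bound[OF g] trdf_bound[OF h] by auto
    obtain x y where "p = (x,y)" by (cases p)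
    then show ?thesis using a that unfolding level_set_def
      by (auto simp: le_Suc_eq numeral_2_eq_2)
  qed
  have "int (weight (VG \<times> VH) (\<lambda>p. min 2 (g (fst p) * h (snd p))))
     = (\<Sum>p\<in>VG \<times> VH. int (g (fst p)) * int (h (snd p)) - 2 * (if p \<in> level_set VG g 2 \<times> level_set VH h 2 then 1 else 0))"
    unfolding weight_def of_nat_sum by (rule sum.cong) (use pt in auto)
  also have "\<dots> = (\<Sum>p\<in>VG \<times> VH. int (g (fst p)) * int (h (snd p)))
       - 2 * (\<Sum>p\<in>VG \<times> VH. (if p \<in> level_set VG g 2 \<times> level_set VH h 2 then 1 else 0))"
    by (simp add: sum_subtractf sum_distrib_left)
  also have "(\<Sum>p\<in>VG \<times> VH. int (g (fst p)) * int (h (snd p))) = int (weight VG g) * int (weight VH h)"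
    unfolding weight_def of_nat_sum sum_product sum.cartesian_product by (simp add: split_def)
  also have "(\<Sum>p\<in>VG \<times> VH. (if p \<in> level_set VG g 2 \<times> level_set VH h 2 then 1 else 0 :: int))
      = int (card (level_set VG g 2 \<times> level_set VH h 2))"
  proof -
    have sub: "level_set VG g 2 \<times> level_set VH h 2 \<subseteq> VG \<times> VH" unfolding level_set_def by auto
    have "VG \<times> VH \<inter> level_set VG g 2 \<times> level_set VH h 2 = level_set VG g 2 \<times> level_set VH h 2"
      using sub by blast
    then show ?thesis using fin by (simp add: sum.If_cases)
  qed
  finally show ?thesis by (simp add: card_cartesian_product)
qed

theorem mainTheorem3:
  fixes VG :: "'a set" and EG :: "'a \<Rightarrow> 'a \<Rightarrow> bool"
    and VH :: "'b set" and EH :: "'b \<Rightarrow> 'b \<Rightarrow> bool"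
  assumes "simple_graph VG EG" and "no_isolated VG EG"
    and "simple_graph VH EH" and "no_isolated VH EH"
  shows "int (gamma_tR (VG \<times> VH) (dprod_edges EG EH)) \<le>
         Min {int (weight VG g) * int (weight VH h)
                - 2 * int (card (level_set VG g 2)) * int (card (level_set VH h 2))
              | g h. is_trdf VG EG g \<and> is_trdf VH EH h}"
proof -
  have finG: "finite VG" and finH: "finite VH" using assms unfolding simple_graph_def by auto
  let ?S = "{int (weight VG g) * int (weight VH h)
                - 2 * int (card (level_set VG g 2)) * int (card (level_set VH h 2))
              | g h. is_trdf VG EG g \<and> is_trdf VH EH h}"
  let ?V = "VG \<times> VH" and ?E = "dprod_edges EG EH"
  have finW: "finite {weight ?V f | f. is_trdf ?V ?E f}"
    by (rule finite_subset[of _ "{0..2 * card ?V}"]) (auto dest: weight_le)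
  have all: "int (gamma_tR ?V ?E) \<le> s" if "s \<in> ?S" for s
  proof -
    obtain g h where gh: "is_trdf VG EG g" "is_trdf VH EH h"
      and s: "s = int (weight VG g) * int (weight VH h)
                - 2 * int (card (level_set VG g 2)) * int (card (level_set VH h 2))"
      using \<open>s \<in> ?S\<close> by blast
    have "gamma_tR ?V ?E \<le> weight ?V (\<lambda>p. min 2 (g (fst p) * h (snd p)))"
      unfolding gamma_tR_def using prod_trdf[OF gh] by (intro Min_le finW) blast
    then show ?thesis using prod_weight[OF gh finG finH] s by linarith
  qed
  define g0 :: "'a \<Rightarrow> nat" where "g0 = (\<lambda>v. if v \<in> VG then 2 else 0)"
  define h0 :: "'b \<Rightarrow> nat" where "h0 = (\<lambda>v. if v \<in> VH then 2 else 0)"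
  have "is_trdf VG EG g0" using assms(1,2) unfolding is_trdf_def g0_def simple_graph_def no_isolated_def
    by (auto, metis)
  moreover have "is_trdf VH EH h0" using assms(3,4) unfolding is_trdf_def h0_def simple_graph_def no_isolated_def
    by (auto, metis)
  ultimately have ne: "?S \<noteq> {}" by blast
  let ?N = "int (4 * card VG * card VH)"
  have finS: "finite ?S"
  proof (rule finite_subset[of _ "{-?N..?N}"])
    show "?S \<subseteq> {-?N..?N}"
    proof
      fix s assume "s \<in> ?S"
      then obtain g h where gh: "is_trdf VG EG g" "is_trdf VH EH h"
        and s: "s = int (weight VG g) * int (weight VH h)
                - 2 * int (card (level_set VG g 2)) * int (card (level_set VH h 2))" by blast
      have w1: "weight VG g \<le> 2 * card VG" "weight VH h \<le> 2 * card VH" using weight_le gh by auto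
      have c1: "card (level_set VG g 2) \<le> card VG" "card (level_set VH h 2) \<le> card VH"
        using level_card finG finH by auto
      have "weight VG g * weight VH h \<le> 2 * card VG * (2 * card VH)" using w1 mult_le_mono by blast
      moreover have "card (level_set VG g 2) * card (level_set VH h 2) \<le> card VG * card VH"
        using c1 mult_le_mono by blast
      ultimately have A: "int (weight VG g) * int (weight VH h) \<le> ?N"
        and B: "int (card (level_set VG g 2)) * int (card (level_set VH h 2)) \<le> int (card VG * card VH)"
        by (simp_all add: of_nat_mult[symmetric] del: of_nat_mult) 
      have C: "0 \<le> int (weight VG g) * int (weight VH h)" by simp
      have D: "0 \<le> int (card (level_set VG g 2)) * int (card (level_set VH h 2))" by simp
      have E: "?N = 4 * int (card VG * card VH)" "0 \<le> int (card VG * card VH)" by simp_all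
      have "-?N \<le> s \<and> s \<le> ?N" unfolding s using A B C D E by linarith
      then show "s \<in> {-?N..?N}" by simp
    qed
  qed simp
  show ?thesis using Min_in[OF finS ne] all by blast
qed

end
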